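(* Let $\mathcal S$ be a trajectory set and fix $n\in\mathbb N$. Define for $S\in\mathcal S$ $$\tau(S):=\min\Big(\inf\{j\in\{1,\dots,n\}:\ \mathcal S_{(S,j-1)}\text{ is an arbitrage node of type I and }S_j\neq S_{j-1}\},\ n+1\Big)$$ (with $\inf\emptyset=+\infty$). Then: (i) for every $S\in\mathcal S$ and $i\in\{0,\dots,n\}$, if $\tau(S)>i$ then there exists $\tilde S\in\mathcal S\setminus\mathcal N_n$ with $(S_0,\dots,S_i)=(\tilde S_0,\dots,\tilde S_i)$; (ii) in the reduced trajectory set $\tilde{\mathcal S}:=\mathcal S\setminus\mathcal N_n$, for every $i\le n-1$ and $S\in\tilde{\mathcal S}$, the node $\tilde{\mathcal S}_{(S,i)}$ (computed in $\tilde{\mathcal S}$) is an up-down node if $\mathcal S_{(S,i)}$ is an up-down node in $\mathcal S$, and it is flat if $\mathcal S_{(S,i)}$ is flat or an arbitrage node of type I in $\mathcal S$.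
   Context: Fix $s_0\in\mathbb R$. A trajectory set is any set $\mathcal T$ of real sequences $S=(S_j)_{j\in\mathbb N_0}$ with $S_0=s_0$. For $S\in\mathcal T$ and $j\in\mathbb N_0$, the node (conditional space) is $\mathcal T_{(S,j)}=\{\tilde S\in\mathcal T:(\tilde S_0,\dots,\tilde S_j)=(S_0,\dots,S_j)\}$. The node $\mathcal T_{(S,j)}$ is an arbitrage node if there is $\varepsilon\in\{-1,1\}$ with $\varepsilon(\tilde S_{j+1}-S_j)\ge0$ for every $\tilde S\in\mathcal T_{(S,j)}$ and strict inequality for at least one $\tilde S\in\mathcal T_{(S,j)}$; an arbitrage node is of type I if some $S'\in\mathcal T_{(S,j)}$ has $S'_{j+1}=S_j$, and of type II otherwise. The node is flat if $\tilde S_{j+1}=S_j$ for every $\tilde S\in\mathcal T_{(S,j)}$, and up-down if it is neither flat nor an arbitrage node. For $n\in\mathbb N$, $\mathcal N_n:=\{S\in\mathcal S:\ \mathcal S_{(S,j)}\text{ is an arbitrage node of type I and }S_{j+1}\ne S_j\text{ for some }j\le n-1\}$. *)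

theory Defs
  imports Main Complex_Main
begin

type_synonym traj = "nat \<Rightarrow> real"

definition trajectory_set :: "real \<Rightarrow> traj set \<Rightarrow> bool" where
  "trajectory_set s0 T \<longleftrightarrow> (\<forall>S\<in>T. S 0 = s0)"

definition node :: "traj set \<Rightarrow> traj \<Rightarrow> nat \<Rightarrow> traj set" where
  "node T S j = {S'\<in>T. \<forall>k\<le>j. S' k = S k}"

definition arbitrage_node :: "traj set \<Rightarrow> traj \<Rightarrow> nat \<Rightarrow> bool" where
  "arbitrage_node T S j \<longleftrightarrow>
     (\<exists>\<epsilon>\<in>{-1, 1::real}.
        (\<forall>S'\<in>node T S j. \<epsilon> * (S' (Suc j) - S j) \<ge> 0) \<and>
        (\<exists>S'\<in>node T S j. \<epsilon> * (S' (Suc j) - S j) > 0))"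

definition arbitrage_node_I :: "traj set \<Rightarrow> traj \<Rightarrow> nat \<Rightarrow> bool" where
  "arbitrage_node_I T S j \<longleftrightarrow>
     arbitrage_node T S j \<and> (\<exists>S'\<in>node T S j. S' (Suc j) = S j)"

definition arbitrage_node_II :: "traj set \<Rightarrow> traj \<Rightarrow> nat \<Rightarrow> bool" where
  "arbitrage_node_II T S j \<longleftrightarrow>
     arbitrage_node T S j \<and> \<not> (\<exists>S'\<in>node T S j. S' (Suc j) = S j)"

definition flat_node :: "traj set \<Rightarrow> traj \<Rightarrow> nat \<Rightarrow> bool" where
  "flat_node T S j \<longleftrightarrow> (\<forall>S'\<in>node T S j. S' (Suc j) = S j)"

definition updown_node :: "traj set \<Rightarrow> traj \<Rightarrow> nat \<Rightarrow> bool" where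
  "updown_node T S j \<longleftrightarrow> \<not> flat_node T S j \<and> \<not> arbitrage_node T S j"

definition NN :: "traj set \<Rightarrow> nat \<Rightarrow> traj set" where
  "NN T n = {S\<in>T. \<exists>j\<le>n - 1. arbitrage_node_I T S j \<and> S (Suc j) \<noteq> S j}"

text \<open>tau(S) = min(inf A, n+1) with inf {} = infinity; since A is a subset of {1..n},
  this is Min A if A is nonempty and n+1 otherwise.\<close>
definition tau :: "traj set \<Rightarrow> nat \<Rightarrow> traj \<Rightarrow> nat" where
  "tau T n S = (let A = {j\<in>{1..n}. arbitrage_node_I T S (j - 1) \<and> S j \<noteq> S (j - 1)}
                in if A = {} then n + 1 else Min A)"

end

theory Submission
  imports Defs
begin

definition good :: "traj set \<Rightarrow> traj \<Rightarrow> nat \<Rightarrow> bool" where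
  "good T R m \<longleftrightarrow> (\<forall>j<m. \<not> (arbitrage_node_I T R j \<and> R (Suc j) \<noteq> R j))"

lemma node_agree:
  assumes "\<forall>k\<le>j. R k = S k"
  shows "node T R j = node T S j"
  using assms unfolding node_def by auto

lemma arbI_agree:
  assumes "\<forall>k\<le>j. R k = S k"
  shows "arbitrage_node_I T R j = arbitrage_node_I T S j"
proof -
  have "node T R j = node T S j" using node_agree[OF assms] .
  moreover have "R j = S j" using assms by simp
  ultimately show ?thesis unfolding arbitrage_node_I_def arbitrage_node_def by simp
qed

lemma good_agree:
  assumes "\<forall>k\<le>m. R k = S k" "good T S m"
  shows "good T R m"
  unfolding good_def
proof (intro allI impI)
  fix j assume j: "j < m"
  have a: "\<forall>k\<le>j. R k = S k" using assms(1) j by auto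
  have "R (Suc j) = S (Suc j)" "R j = S j" using assms(1) j by auto
  then show "\<not> (arbitrage_node_I T R j \<and> R (Suc j) \<noteq> R j)"
    using arbI_agree[OF a, of T] assms(2) j unfolding good_def by auto
qed

lemma extend:
  "R \<in> T \<Longrightarrow> good T R m \<Longrightarrow> n - m = d \<Longrightarrow> \<exists>R'\<in>T. good T R' n \<and> (\<forall>k\<le>m. R' k = R k)"
proof (induction d arbitrary: R m)
  case 0
  then have "n \<le> m" by simp
  then show ?case using 0 by (intro bexI[of _ R]) (auto simp: good_def)
next
  case (Suc d)
  then have mn: "m < n" "n - Suc m = d" by auto
  show ?case
  proof (cases "arbitrage_node_I T R m")
    case True
    then obtain S' where S': "S' \<in> node T R m" "S' (Suc m) = R m"
      unfolding arbitrage_node_I_def by blast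
    have ag: "\<forall>k\<le>m. S' k = R k" using S'(1) unfolding node_def by auto
    have "good T S' m" using good_agree[OF ag Suc.prems(2)] .
    then have "good T S' (Suc m)" using S'(2) ag unfolding good_def
      using less_Suc_eq by auto
    moreover have "S' \<in> T" using S'(1) unfolding node_def by auto
    ultimately obtain R' where "R' \<in> T" "good T R' n" "\<forall>k\<le>Suc m. R' k = S' k"
      using Suc.IH mn by blast
    then show ?thesis using ag by (intro bexI[of _ R']) auto
  next
    case False
    then have "good T R (Suc m)" using Suc.prems(2) unfolding good_def
      using less_Suc_eq by auto
    then obtain R' where "R' \<in> T" "good T R' n" "\<forall>k\<le>Suc m. R' k = R k"
      using Suc.IH Suc.prems mn by blast
    then show ?thesis by (intro bexI[of _ R']) auto
  qed
qed

lemma good_notNN: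
  assumes "good T R n" "n \<ge> 1"
  shows "R \<notin> NN T n"
  using assms unfolding good_def NN_def by fastforce

lemma extend_NN:
  assumes "R \<in> T" "good T R m" "n \<ge> 1"
  shows "\<exists>R'\<in>T - NN T n. \<forall>k\<le>m. R' k = R k"
  using extend[OF assms(1,2) refl, of n] good_notNN assms(3) by blast

lemma updown_both:
  assumes "updown_node T S i"
  shows "\<exists>S1\<in>node T S i. S1 (Suc i) > S i" "\<exists>S2\<in>node T S i. S2 (Suc i) < S i"
proof -
  obtain S0 where S0: "S0 \<in> node T S i" "S0 (Suc i) \<noteq> S i"
    using assms unfolding updown_node_def flat_node_def by auto
  have na: "\<not> arbitrage_node T S i" using assms unfolding updown_node_def by simp
  show "\<exists>S1\<in>node T S i. S1 (Suc i) > S i"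
  proof (rule ccontr)
    assume c: "\<not> (\<exists>S1\<in>node T S i. S1 (Suc i) > S i)"
    have "(\<forall>S'\<in>node T S i. (-1::real) * (S' (Suc i) - S i) \<ge> 0)" using c by force
    moreover have "(-1::real) * (S0 (Suc i) - S i) > 0" using c S0 by force
    ultimately have "arbitrage_node T S i" unfolding arbitrage_node_def using S0(1) by blast
    then show False using na by simp
  qed
  show "\<exists>S1\<in>node T S i. S1 (Suc i) < S i"
  proof (rule ccontr)
    assume c: "\<not> (\<exists>S1\<in>node T S i. S1 (Suc i) < S i)"
    have "(\<forall>S'\<in>node T S i. (1::real) * (S' (Suc i) - S i) \<ge> 0)" using c by force
    moreover have "(1::real) * (S0 (Suc i) - S i) > 0" using c S0 by force
    ultimately have "arbitrage_node T S i" unfolding arbitrage_node_def using S0(1) by blast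
    then show False using na by simp
  qed
qed

theorem proposition5p5:
  fixes s0 :: real and T :: "(nat \<Rightarrow> real) set" and n :: nat
  assumes "trajectory_set s0 T" and "n \<ge> 1"
  shows "(\<forall>S\<in>T. \<forall>i\<le>n. tau T n S > i \<longrightarrow>
            (\<exists>S'\<in>T - NN T n. \<forall>k\<le>i. S' k = S k))
       \<and> (\<forall>i\<le>n - 1. \<forall>S\<in>T - NN T n.
            (updown_node T S i \<longrightarrow> updown_node (T - NN T n) S i) \<and>
            ((flat_node T S i \<or> arbitrage_node_I T S i) \<longrightarrow> flat_node (T - NN T n) S i))"
proof (intro conjI ballI allI impI)
  fix S i assume S: "S \<in> T" and i: "i \<le> n" and t: "tau T n S > i"
  define A where "A = {j\<in>{1..n}. arbitrage_node_I T S (j - 1) \<and> S j \<noteq> S (j - 1)}"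
  have "\<forall>j\<in>A. j > i"
  proof
    fix j assume j: "j \<in> A"
    then have "A \<noteq> {}" by auto
    moreover have "finite A" unfolding A_def by auto
    ultimately have "tau T n S = Min A" unfolding tau_def A_def[symmetric] by simp
    moreover have "Min A \<le> j" using Min_le[OF \<open>finite A\<close> j] .
    ultimately show "j > i" using t by simp
  qed
  then have "good T S i" unfolding good_def
  proof (intro allI impI notI)
    fix j assume h: "\<forall>j\<in>A. j > i" and j: "j < i" and b: "arbitrage_node_I T S j \<and> S (Suc j) \<noteq> S j"
    have "Suc j \<in> A" unfolding A_def using b j i by auto
    then show False using h j by auto
  qed
  then show "\<exists>S'\<in>T - NN T n. \<forall>k\<le>i. S' k = S k" using extend_NN[OF S _ assms(2)] by blast
next
  fix i S assume i: "i \<le> n - 1" and S: "S \<in> T - NN T n" and ud: "updown_node T S i"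
  have gS: "good T S n" using S i unfolding NN_def good_def by auto
  have nar: "\<not> arbitrage_node_I T S i" using ud unfolding updown_node_def arbitrage_node_I_def by auto
  have ext: "\<exists>S'\<in>node (T - NN T n) S i. S' (Suc i) = S1 (Suc i)" if S1: "S1 \<in> node T S i" for S1
  proof -
    have ag: "\<forall>k\<le>i. S1 k = S k" using S1 unfolding node_def by auto
    have "good T S i" using gS i \<open>n \<ge> 1\<close> unfolding good_def by auto
    then have "good T S1 i" using good_agree[OF ag] by blast
    moreover have "\<not> arbitrage_node_I T S1 i" using arbI_agree[OF ag] nar by simp
    ultimately have "good T S1 (Suc i)" unfolding good_def using less_Suc_eq by auto
    moreover have "S1 \<in> T" using S1 unfolding node_def by auto
    ultimately obtain R where R: "R \<in> T - NN T n" "\<forall>k\<le>Suc i. R k = S1 k"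
      using extend_NN assms(2) by blast
    then have "R \<in> node (T - NN T n) S i" using ag unfolding node_def by auto
    then show ?thesis using R by auto
  qed
  obtain S1 where "S1\<in>node T S i" "S1 (Suc i) > S i" using updown_both(1)[OF ud] by blast
  then obtain R1 where R1: "R1 \<in> node (T - NN T n) S i" "R1 (Suc i) > S i" using ext by fastforce
  obtain S2 where "S2\<in>node T S i" "S2 (Suc i) < S i" using updown_both(2)[OF ud] by blast
  then obtain R2 where R2: "R2 \<in> node (T - NN T n) S i" "R2 (Suc i) < S i" using ext by fastforce
  show "updown_node (T - NN T n) S i"
    unfolding updown_node_def flat_node_def arbitrage_node_def
  proof (intro conjI)
    show "\<not> (\<forall>S'\<in>node (T - NN T n) S i. S' (Suc i) = S i)" using R1 by force
    show "\<not> (\<exists>\<epsilon>\<in>{- 1, 1}. (\<forall>S'\<in>node (T - NN T n) S i. 0 \<le> \<epsilon> * (S' (Suc i) - S i)) \<and>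
            (\<exists>S'\<in>node (T - NN T n) S i. 0 < \<epsilon> * (S' (Suc i) - S i)))"
    proof
      assume "\<exists>\<epsilon>\<in>{- 1, 1::real}. (\<forall>S'\<in>node (T - NN T n) S i. 0 \<le> \<epsilon> * (S' (Suc i) - S i)) \<and>
            (\<exists>S'\<in>node (T - NN T n) S i. 0 < \<epsilon> * (S' (Suc i) - S i))"
      then obtain e :: real where e: "e = -1 \<or> e = 1" "\<forall>S'\<in>node (T - NN T n) S i. 0 \<le> e * (S' (Suc i) - S i)" by blast
      have "0 \<le> e * (R1 (Suc i) - S i)" "0 \<le> e * (R2 (Suc i) - S i)" using e R1 R2 by auto
      then show False using e(1) R1(2) R2(2) by auto
    qed
  qed
next
  fix i S assume i: "i \<le> n - 1" and S: "S \<in> T - NN T n" and fa: "flat_node T S i \<or> arbitrage_node_I T S i"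
  show "flat_node (T - NN T n) S i"
    unfolding flat_node_def
  proof
    fix S' assume S': "S' \<in> node (T - NN T n) S i"
    then have S'T: "S' \<in> node T S i" "S' \<notin> NN T n" "S' \<in> T" unfolding node_def by auto
    have ag: "\<forall>k\<le>i. S' k = S k" using S' unfolding node_def by auto
    show "S' (Suc i) = S i"
    proof (cases "flat_node T S i")
      case True then show ?thesis using S'T unfolding flat_node_def by auto
    next
      case False
      then have "arbitrage_node_I T S' i" using fa arbI_agree[OF ag] by simp
      then have "S' (Suc i) = S' i" using S'T(2,3) i unfolding NN_def by auto
      then show ?thesis using ag by simp
    qed
  qed
qed

end
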